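(* Let $\mu$ be a singular cardinal with $\aleph_0<\kappa=\operatorname{cf}(\mu)<\mu$ and $\lambda=\mu^+$. Let $\langle S_i:i<\kappa\rangle$ be pairwise disjoint stationary subsets of $\{\delta<\lambda:\operatorname{cf}(\delta)=\kappa\}$, and for each $i<\kappa$ let $\bar C^i=\langle C^i_\delta:\delta\in S_i\rangle$ be an $S_i$-club system such that $\lambda\notin\mathrm{id}_p(\bar C^i,\bar J^i)$, where $\bar J^i=\langle J^{b[\mu]}_{C^i_\delta}:\delta\in S_i\rangle$, and $\operatorname{otp}(C^i_\delta)=\kappa$ for every $\delta\in S_i$. Then there is a $\lambda$-club system $\bar e=\langle e_\beta:\beta<\lambda\text{ limit}\rangle$ such that $|e_\beta|\leq\operatorname{cf}(\beta)+\operatorname{cf}(\mu)$ for each $\beta$, and for every $i<\kappa$, every limit $\beta<\lambda$ and every $\delta\in S_i\cap(e_\beta\cup\{\beta\})$, we have $C^i_\delta\subseteq e_\beta$.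
   Context: An $S$-club system is a sequence $\langle C_\delta:\delta\in S\rangle$ with each $C_\delta$ a closed unbounded subset of $\delta$; a $\lambda$-club system is such a sequence indexed by all limit ordinals $\beta<\lambda$. $\operatorname{nacc}(C)$ denotes the non-accumulation points of $C$. $J^{b[\mu]}_{C_\delta}$ is the ideal of $A\subseteq C_\delta$ for which there exist a cardinal $\theta<\mu$ and $\gamma<\delta$ such that every $\beta\in A\cap\operatorname{nacc}(C_\delta)$ has $\beta<\gamma$ or $\operatorname{cf}(\beta)<\theta$. $\mathrm{id}_p(\bar C,\bar J)$ is the ideal of those $A\subseteq\lambda$ for which there is a club $E\subseteq\lambda$ with $E\cap C_\delta\in J_\delta$ for all $\delta\in A\cap S$. *)

theory Defs
  imports Main
begin

text \<open>Ordinals below lambda are the elements of the field of a well-order r on a type 'a;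
  the ordinal delta is identified with its set of predecessors underS r delta.\<close>

definition cofinal :: "'a rel \<Rightarrow> 'a set \<Rightarrow> 'a set \<Rightarrow> bool" where
  "cofinal r A X \<longleftrightarrow> X \<subseteq> A \<and> (\<forall>\<alpha>\<in>A. \<exists>x\<in>X. (\<alpha>, x) \<in> r)"

definition cof :: "'a rel \<Rightarrow> 'a \<Rightarrow> 'a rel" where
  "cof r \<delta> = card_of (SOME X. cofinal r (underS r \<delta>) X \<and>
      (\<forall>Y. cofinal r (underS r \<delta>) Y \<longrightarrow> ordLeq2 (card_of X) (card_of Y)))"

definition isLimit :: "'a rel \<Rightarrow> 'a \<Rightarrow> bool" where
  "isLimit r \<beta> \<longleftrightarrow> \<beta> \<in> Field r \<and> underS r \<beta> \<noteq> {} \<and>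
      (\<forall>\<alpha>\<in>underS r \<beta>. \<exists>\<gamma>\<in>underS r \<beta>. \<alpha> \<in> underS r \<gamma>)"

definition club_in :: "'a rel \<Rightarrow> 'a set \<Rightarrow> 'a set \<Rightarrow> bool" where
  "club_in r A C \<longleftrightarrow> C \<subseteq> A \<and> (\<forall>\<alpha>\<in>A. \<exists>x\<in>C. (\<alpha>, x) \<in> r) \<and>
      (\<forall>\<gamma>\<in>A. isLimit r \<gamma> \<and> cofinal r (underS r \<gamma>) (C \<inter> underS r \<gamma>) \<longrightarrow> \<gamma> \<in> C)"

definition stationary :: "'a rel \<Rightarrow> 'a set \<Rightarrow> bool" where
  "stationary r S \<longleftrightarrow> S \<subseteq> Field r \<and> (\<forall>E. club_in r (Field r) E \<longrightarrow> S \<inter> E \<noteq> {})"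

definition nacc :: "'a rel \<Rightarrow> 'a set \<Rightarrow> 'a set" where
  "nacc r C = {x \<in> C. \<not> (isLimit r x \<and> cofinal r (underS r x) (C \<inter> underS r x))}"

text \<open>Membership of A in the ideal J^{b[mu]}_{C_delta}; mu is the ordinal m; cardinals theta < mu
  are represented by ordinals t < m (compared via card_of (underS r t)).\<close>
definition Jb :: "'a rel \<Rightarrow> 'a \<Rightarrow> 'a \<Rightarrow> 'a set \<Rightarrow> 'a set \<Rightarrow> bool" where
  "Jb r m \<delta> C A \<longleftrightarrow> A \<subseteq> C \<and>
     (\<exists>t\<in>underS r m. \<exists>\<gamma>\<in>underS r \<delta>. \<forall>\<beta>\<in>A \<inter> nacc r C.
         \<beta> \<in> underS r \<gamma> \<or> ordLess2 (cof r \<beta>) (card_of (underS r t)))"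

definition in_idp :: "'a rel \<Rightarrow> 'a set \<Rightarrow> ('a \<Rightarrow> 'a set) \<Rightarrow> ('a \<Rightarrow> 'a set \<Rightarrow> bool) \<Rightarrow> 'a set \<Rightarrow> bool" where
  "in_idp r S C J A \<longleftrightarrow> A \<subseteq> Field r \<and>
     (\<exists>E. club_in r (Field r) E \<and> (\<forall>\<delta>\<in>A \<inter> S. J \<delta> (E \<inter> C \<delta>)))"

definition is_cardinal :: "'a rel \<Rightarrow> 'a \<Rightarrow> bool" where
  "is_cardinal r t \<longleftrightarrow> t \<in> Field r \<and>
     (\<forall>x\<in>underS r t. ordLess2 (card_of (underS r x)) (card_of (underS r t)))"

end

theory Submission
  imports Defs
begin

lemma wo_props:
  assumes "Well_order r"
  shows "trans r" "antisym r" "refl_on (Field r) r" "\<And>a b. a \<in> Field r \<Longrightarrow> b \<in> Field r \<Longrightarrow> (a,b) \<in> r \<or> (b,a) \<in> r"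
proof -
  show "trans r" "antisym r" "refl_on (Field r) r" using assms unfolding order_on_defs by auto
  fix a b assume "a \<in> Field r" "b \<in> Field r"
  then show "(a,b) \<in> r \<or> (b,a) \<in> r"
    using assms unfolding order_on_defs total_on_def refl_on_def by (cases "a = b") auto
qed

lemma underS_Field: "underS r a \<subseteq> Field r"
  unfolding underS_def Field_def by auto

lemma underS_trans1:
  assumes "Well_order r" "b \<in> underS r a" "(a,c) \<in> r" shows "b \<in> underS r c"
proof -
  have "(b,c) \<in> r" using assms wo_props(1)[OF assms(1)] unfolding underS_def trans_def by blast
  moreover have "b \<noteq> c"
  proof
    assume "b = c" then have "(a,b) \<in> r" using assms by simp
    then show False using assms wo_props(2)[OF assms(1)] unfolding underS_def antisym_def by blast
  qed
  ultimately show ?thesis unfolding underS_def by simp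
qed

lemma underS_trans2:
  assumes "Well_order r" "(b,a) \<in> r" "a \<in> underS r c" shows "b \<in> underS r c"
proof -
  have "(b,c) \<in> r" using assms wo_props(1)[OF assms(1)] unfolding underS_def trans_def by blast
  moreover have "b \<noteq> c"
  proof
    assume "b = c" then have "(c,a) \<in> r" using assms by simp
    then show False using assms wo_props(2)[OF assms(1)] unfolding underS_def antisym_def by blast
  qed
  ultimately show ?thesis unfolding underS_def by simp
qed

lemma underS_rel: "b \<in> underS r a \<Longrightarrow> (b,a) \<in> r \<and> b \<noteq> a"
  unfolding underS_def by simp

definition minc :: "'a rel \<Rightarrow> 'a \<Rightarrow> 'a set" where
  "minc r \<beta> = (SOME X. cofinal r (underS r \<beta>) X \<and>
      (\<forall>Y. cofinal r (underS r \<beta>) Y \<longrightarrow> ordLeq2 (card_of X) (card_of Y)))"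

lemma cof_minc: "cof r \<beta> = card_of (minc r \<beta>)"
  unfolding cof_def minc_def by simp

lemma minc_spec:
  assumes wo: "Well_order r"
  shows "cofinal r (underS r \<beta>) (minc r \<beta>) \<and>
      (\<forall>Y. cofinal r (underS r \<beta>) Y \<longrightarrow> ordLeq2 (card_of (minc r \<beta>)) (card_of Y))"
proof -
  let ?F = "{Y. cofinal r (underS r \<beta>) Y}"
  have "\<forall>\<alpha>\<in>underS r \<beta>. (\<alpha>, \<alpha>) \<in> r"
  proof
    fix \<alpha> assume "\<alpha> \<in> underS r \<beta>"
    then have "\<alpha> \<in> Field r" using underS_Field[of r \<beta>] by (rule subsetD[rotated])
    then show "(\<alpha>, \<alpha>) \<in> r" using wo_props(3)[OF wo] by (simp add: refl_onD)
  qed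
  then have "underS r \<beta> \<in> ?F" unfolding cofinal_def by blast
  then have zz: "card_of (underS r \<beta>) \<in> card_of ` ?F" by (rule imageI)
  obtain z where z: "z \<in> card_of ` ?F" and zm: "\<And>y. (y, z) \<in> ordLess \<Longrightarrow> y \<notin> card_of ` ?F"
    using wfE_min[OF wf_ordLess zz] by blast
  then obtain X where X: "X \<in> ?F" "z = card_of X" by blast
  have "\<forall>Y. cofinal r (underS r \<beta>) Y \<longrightarrow> ordLeq2 (card_of X) (card_of Y)"
  proof (intro allI impI)
    fix Y assume "cofinal r (underS r \<beta>) Y"
    then have "\<not> ordLess2 (card_of Y) (card_of X)" using zm X by blast
    then show "ordLeq2 (card_of X) (card_of Y)"
      using ordLess_or_ordLeq[OF card_of_Well_order card_of_Well_order] by blast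
  qed
  define P where "P = (\<lambda>X. cofinal r (underS r \<beta>) X \<and>
      (\<forall>Y. cofinal r (underS r \<beta>) Y \<longrightarrow> ordLeq2 (card_of X) (card_of Y)))"
  have "P X" unfolding P_def using X \<open>\<forall>Y. _\<close> by blast
  then have "P (Eps P)" by (rule someI)
  moreover have "minc r \<beta> = Eps P" unfolding minc_def P_def by (rule refl)
  ultimately show ?thesis unfolding P_def by simp
qed

definition clo :: "'a rel \<Rightarrow> 'a \<Rightarrow> 'a set \<Rightarrow> 'a set" where
  "clo r \<beta> X = X \<union> {\<gamma> \<in> underS r \<beta>. isLimit r \<gamma> \<and> cofinal r (underS r \<gamma>) (X \<inter> underS r \<gamma>)}"

lemma clo_sub: "X \<subseteq> underS r \<beta> \<Longrightarrow> clo r \<beta> X \<subseteq> underS r \<beta>"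
  unfolding clo_def by auto

lemma clo_closed:
  assumes wo: "Well_order r" and X: "X \<subseteq> underS r \<beta>"
    and g: "isLimit r \<gamma>" "cofinal r (underS r \<gamma>) (clo r \<beta> X \<inter> underS r \<gamma>)"
  shows "cofinal r (underS r \<gamma>) (X \<inter> underS r \<gamma>)"
  unfolding cofinal_def
proof (intro conjI ballI)
  show "X \<inter> underS r \<gamma> \<subseteq> underS r \<gamma>" by blast
  fix \<alpha> assume a: "\<alpha> \<in> underS r \<gamma>"
  then obtain \<gamma>' where g': "\<gamma>' \<in> underS r \<gamma>" "\<alpha> \<in> underS r \<gamma>'" using g(1) unfolding isLimit_def by blast
  then obtain x where x: "x \<in> clo r \<beta> X \<inter> underS r \<gamma>" "(\<gamma>', x) \<in> r" using g(2) unfolding cofinal_def by blast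
  have ax: "\<alpha> \<in> underS r x" using underS_trans1[OF wo g'(2) x(2)] .
  show "\<exists>y\<in>X \<inter> underS r \<gamma>. (\<alpha>, y) \<in> r"
  proof (cases "x \<in> X")
    case True
    have "(\<alpha>, x) \<in> r" using underS_rel[OF ax] by blast
    then show ?thesis using x True by blast
  next
    case False
    then have "cofinal r (underS r x) (X \<inter> underS r x)" using x(1) unfolding clo_def by blast
    then obtain y where y: "y \<in> X \<inter> underS r x" "(\<alpha>, y) \<in> r" using ax unfolding cofinal_def by blast
    have "(x, \<gamma>) \<in> r" using x(1) underS_rel[of x r \<gamma>] by blast
    then have "y \<in> underS r \<gamma>" using underS_trans1[OF wo _ \<open>(x, \<gamma>) \<in> r\<close>] y by blast
    then show ?thesis using y by blast
  qed
qed


lemma clo_card: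
  assumes wo: "Well_order r" and X: "X \<subseteq> underS r \<beta>" and inf: "\<not> finite N"
    and c: "ordLeq2 (card_of X) (card_of N)"
  shows "ordLeq2 (card_of (clo r \<beta> X)) (card_of N)"
proof -
  define L where "L = {\<gamma> \<in> underS r \<beta>. isLimit r \<gamma> \<and> cofinal r (underS r \<gamma>) (X \<inter> underS r \<gamma>)}"
  have cl: "clo r \<beta> X = X \<union> L" unfolding clo_def L_def by simp
  have wr: "wo_rel r" using wo unfolding wo_rel_def .
  define g where "g \<gamma> = wo_rel.minim r {x\<in>X. \<gamma> \<in> underS r x}" for \<gamma>
  define f where "f \<gamma> = (if \<exists>x\<in>X. \<gamma> \<in> underS r x then Inl (g \<gamma>) else Inr ())" for \<gamma>
  have gX: "g \<gamma> \<in> {x\<in>X. \<gamma> \<in> underS r x}" if "\<exists>x\<in>X. \<gamma> \<in> underS r x" for \<gamma>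
  proof -
    have "{x\<in>X. \<gamma> \<in> underS r x} \<subseteq> Field r" using X underS_Field[of r \<beta>] by blast
    moreover have "{x\<in>X. \<gamma> \<in> underS r x} \<noteq> {}" using that by blast
    ultimately show ?thesis unfolding g_def by (rule wo_rel.minim_in[OF wr])
  qed
  have key: "f \<gamma>1 \<noteq> f \<gamma>2" if g1: "\<gamma>1 \<in> L" "\<gamma>2 \<in> L" "\<gamma>1 \<in> underS r \<gamma>2" for \<gamma>1 \<gamma>2
  proof -
    have lim: "isLimit r \<gamma>2" "cofinal r (underS r \<gamma>2) (X \<inter> underS r \<gamma>2)" using g1(2) L_def by auto
    obtain \<gamma>' where g': "\<gamma>' \<in> underS r \<gamma>2" "\<gamma>1 \<in> underS r \<gamma>'" using lim(1) g1(3) unfolding isLimit_def by blast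
    then obtain x where x: "x \<in> X" "x \<in> underS r \<gamma>2" "(\<gamma>',x) \<in> r" using lim(2) unfolding cofinal_def by blast
    have x1: "\<gamma>1 \<in> underS r x" using underS_trans1[OF wo g'(2) x(3)] .
    show ?thesis
    proof
      assume eq: "f \<gamma>1 = f \<gamma>2"
      have e1: "f \<gamma>1 = Inl (g \<gamma>1)" using x x1 f_def by auto
      then have ex2: "\<exists>x\<in>X. \<gamma>2 \<in> underS r x" using eq f_def by (auto split: if_splits)
      then have e2: "f \<gamma>2 = Inl (g \<gamma>2)" using f_def by auto
      have "g \<gamma>2 \<in> {x\<in>X. \<gamma>2 \<in> underS r x}" using gX[OF ex2] .
      then have "\<gamma>2 \<in> underS r (g \<gamma>2)" by blast
      then have "(\<gamma>2, g \<gamma>2) \<in> r" using underS_rel[of \<gamma>2 r "g \<gamma>2"] by blast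
      then have "x \<in> underS r (g \<gamma>2)" using underS_trans1[OF wo x(2)] by blast
      moreover have "(g \<gamma>1, x) \<in> r" unfolding g_def
        by (rule wo_rel.minim_least[OF wr]) (use X underS_Field[of r \<beta>] x x1 in auto)
      moreover have "g \<gamma>1 = g \<gamma>2" using eq e1 e2 by simp
      ultimately show False using wo_props(2)[OF wo] underS_rel[of x r "g \<gamma>2"] unfolding antisym_def by auto
    qed
  qed
  have inj: "inj_on f L"
  proof (rule inj_onI)
    fix a b assume ab: "a \<in> L" "b \<in> L" "f a = f b"
    show "a = b"
    proof (rule ccontr)
      assume "a \<noteq> b"
      have "a \<in> Field r" "b \<in> Field r" using ab L_def underS_Field[of r \<beta>] by blast+
      then have "a \<in> underS r b \<or> b \<in> underS r a" using wo_props(4)[OF wo] \<open>a\<noteq>b\<close> unfolding underS_def by blast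
      then show False using key[of a b] key[of b a] ab by auto
    qed
  qed
  have "f ` L \<subseteq> X <+> (UNIV :: unit set)"
    using gX unfolding f_def by auto
  then have L1: "ordLeq2 (card_of L) (card_of (X <+> (UNIV :: unit set)))"
    using card_of_ordLeq inj by blast
  obtain n0 where "n0 \<in> N" using inf by (metis finite.emptyI ex_in_conv)
  have "inj_on (\<lambda>_::unit. n0) UNIV" unfolding inj_on_def by simp
  then have u: "ordLeq2 (card_of (UNIV :: unit set)) (card_of N)"
    using card_of_ordLeq[of "UNIV :: unit set" N] \<open>n0 \<in> N\<close> by blast
  have "ordLeq2 (card_of (X <+> (UNIV :: unit set))) (card_of N)"
    using card_of_Plus_ordLeq_infinite_Field[of "card_of N" X "UNIV :: unit set"] inf c u
      unfolding Field_card_of using card_of_card_order_on by blast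
  then have "ordLeq2 (card_of L) (card_of N)" using L1 ordLeq_transitive by blast
  then show ?thesis unfolding cl
    using card_of_Un_ordLeq_infinite_Field[of "card_of N" X L] inf c unfolding Field_card_of
    using card_of_card_order_on by blast
qed

lemma cof_uncountable:
  fixes B :: "nat \<Rightarrow> 'a set"
  assumes wo: "Well_order r"
    and cU: "cofinal r (underS r \<delta>) ((\<Union>n. B n) \<inter> underS r \<delta>)"
    and unc: "\<not> ordLeq2 (card_of (minc r \<delta>)) (card_of (UNIV::nat set))"
  shows "\<exists>n. cofinal r (underS r \<delta>) (B n \<inter> underS r \<delta>)"
proof (rule ccontr)
  assume "\<not> ?thesis"
  then have "\<forall>n. \<exists>\<alpha>. \<alpha> \<in> underS r \<delta> \<and> (\<forall>x\<in>B n \<inter> underS r \<delta>. (\<alpha>,x) \<notin> r)" unfolding cofinal_def by blast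
  from choice[OF this] obtain b where b: "\<forall>n. b n \<in> underS r \<delta> \<and> (\<forall>x\<in>B n \<inter> underS r \<delta>. (b n,x) \<notin> r)" by blast
  have "cofinal r (underS r \<delta>) (range b)" unfolding cofinal_def
  proof (intro conjI ballI)
    show "range b \<subseteq> underS r \<delta>" using b by blast
    fix \<alpha> assume "\<alpha> \<in> underS r \<delta>"
    then obtain x n where x: "x \<in> B n" "x \<in> underS r \<delta>" "(\<alpha>,x)\<in>r" using cU unfolding cofinal_def by blast
    then have "(b n, x) \<notin> r" using b by blast
    moreover have "x \<in> Field r" "b n \<in> Field r" using x(2) b underS_Field[of r \<delta>] by blast+
    ultimately have "(x, b n) \<in> r" using wo_props(4)[OF wo] by blast
    then show "\<exists>y\<in>range b. (\<alpha>,y)\<in>r" using x(3) wo_props(1)[OF wo] unfolding trans_def by blast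
  qed
  then have "ordLeq2 (card_of (minc r \<delta>)) (card_of (range b))" using minc_spec[OF wo] by blast
  moreover have "ordLeq2 (card_of (range b)) (card_of (UNIV::nat set))" by (rule card_of_image)
  ultimately show False using unc ordLeq_transitive by blast
qed


primrec chain :: "'a rel \<Rightarrow> 'a set \<Rightarrow> ('a \<Rightarrow> 'a set) \<Rightarrow> ('a \<Rightarrow> 'a \<Rightarrow> 'a set) \<Rightarrow> 'a \<Rightarrow> nat \<Rightarrow> 'a set" where
  "chain r I S C \<beta> 0 = minc r \<beta> \<union> (\<Union>i\<in>I. if \<beta> \<in> S i then C i \<beta> else {})"
| "chain r I S C \<beta> (Suc n) = chain r I S C \<beta> n \<union>
     (\<Union>i\<in>I. \<Union>\<delta>\<in>clo r \<beta> (chain r I S C \<beta> n) \<inter> S i. C i \<delta>)"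

theorem claim3p2:
  fixes r :: "'a rel" and m k :: 'a
    and S :: "'a \<Rightarrow> 'a set" and C :: "'a \<Rightarrow> 'a \<Rightarrow> 'a set"
  assumes wo: "Well_order r"
    and mu_card: "is_cardinal r m"
    and lam: "ordIso2 r (cardSuc (card_of (underS r m)))"
    and kappa_card: "is_cardinal r k"
    and kappa_cf: "ordIso2 (card_of (underS r k)) (cof r m)"
    and kappa_unc: "ordLess2 (card_of (UNIV :: nat set)) (card_of (underS r k))"
    and kappa_lt: "k \<in> underS r m"
    and S_disj: "\<forall>i\<in>underS r k. \<forall>j\<in>underS r k. i \<noteq> j \<longrightarrow> S i \<inter> S j = {}"
    and S_stat: "\<forall>i\<in>underS r k. stationary r (S i)"
    and S_cf: "\<forall>i\<in>underS r k. \<forall>\<delta>\<in>S i. \<delta> \<in> Field r \<and> ordIso2 (cof r \<delta>) (card_of (underS r k))"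
    and C_club: "\<forall>i\<in>underS r k. \<forall>\<delta>\<in>S i. club_in r (underS r \<delta>) (C i \<delta>)"
    and C_idp: "\<forall>i\<in>underS r k. \<not> in_idp r (S i) (C i) (\<lambda>\<delta>. Jb r m \<delta> (C i \<delta>)) (Field r)"
    and C_otp: "\<forall>i\<in>underS r k. \<forall>\<delta>\<in>S i. ordIso2 (Restr r (C i \<delta>)) (Restr r (underS r k))"
  shows "\<exists>e :: 'a \<Rightarrow> 'a set.
           (\<forall>\<beta>. isLimit r \<beta> \<longrightarrow> club_in r (underS r \<beta>) (e \<beta>) \<and>
                 ordLeq2 (card_of (e \<beta>)) (BNF_Cardinal_Arithmetic.csum (cof r \<beta>) (cof r m))) \<and>
           (\<forall>i\<in>underS r k. \<forall>\<beta>. isLimit r \<beta> \<longrightarrow>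
                 (\<forall>\<delta>\<in>S i \<inter> (e \<beta> \<union> {\<beta>}). C i \<delta> \<subseteq> e \<beta>))"
proof -
  let ?K = "underS r k"
  define U where "U \<beta> = (\<Union>n. chain r ?K S C \<beta> n)" for \<beta>
  define e where "e \<beta> = clo r \<beta> (U \<beta>)" for \<beta>
  have Cs: "C i \<delta> \<subseteq> underS r \<delta>" if "i \<in> ?K" "\<delta> \<in> S i" for i \<delta>
    using C_club that unfolding club_in_def by blast
  have KF: "?K \<subseteq> Field r" by (rule underS_Field)
  have Csize: "ordLeq2 (card_of (C i \<delta>)) (card_of ?K)" if "i \<in> ?K" "\<delta> \<in> S i" for i \<delta>
  proof -
    have "ordIso2 (Restr r (C i \<delta>)) (Restr r ?K)" using C_otp that by blast
    then have "ordLeq2 (Restr r (C i \<delta>)) (Restr r ?K)" by (rule ordIso_imp_ordLeq)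
    then have "ordLeq2 (card_of (Field (Restr r (C i \<delta>)))) (card_of (Field (Restr r ?K)))"
      by (rule card_of_mono2)
    moreover have "Field (Restr r (C i \<delta>)) = C i \<delta>"
    proof -
      have "C i \<delta> \<subseteq> Field r" using Cs[OF that] underS_Field[of r \<delta>] by (rule subset_trans)
      then show ?thesis by (rule Refl_Field_Restr2[OF wo_props(3)[OF wo]])
    qed
    moreover have "Field (Restr r ?K) = ?K"
      using Refl_Field_Restr2[OF wo_props(3)[OF wo] KF] .
    ultimately show ?thesis by simp
  qed
  have sub: "chain r ?K S C \<beta> n \<subseteq> underS r \<beta>" for \<beta> n
  proof (induction n)
    case 0
    have "minc r \<beta> \<subseteq> underS r \<beta>" using minc_spec[OF wo, of \<beta>] unfolding cofinal_def by blast
    moreover have "C i \<beta> \<subseteq> underS r \<beta>" if "i \<in> ?K" "\<beta> \<in> S i" for i using Cs that .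
    ultimately show ?case by auto
  next
    case (Suc n)
    have cs: "clo r \<beta> (chain r ?K S C \<beta> n) \<subseteq> underS r \<beta>" using Suc by (rule clo_sub)
    have "C i \<delta> \<subseteq> underS r \<beta>" if "i \<in> ?K" "\<delta> \<in> clo r \<beta> (chain r ?K S C \<beta> n) \<inter> S i" for i \<delta>
    proof
      fix x assume "x \<in> C i \<delta>"
      then have "x \<in> underS r \<delta>" using Cs that by blast
      moreover have "(\<delta>, \<beta>) \<in> r" using that cs underS_rel[of \<delta> r \<beta>] by blast
      ultimately show "x \<in> underS r \<beta>" by (rule underS_trans1[OF wo])
    qed
    then show ?case using Suc by auto
  qed
  have Usub: "U \<beta> \<subseteq> underS r \<beta>" for \<beta> using sub unfolding U_def by blast
  have chU: "chain r ?K S C \<beta> n \<subseteq> U \<beta>" for \<beta> n unfolding U_def by blast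
  have esub: "U \<beta> \<subseteq> e \<beta>" for \<beta> unfolding e_def clo_def by blast
  have cardp: "ordLeq2 (card_of (e \<beta>)) (BNF_Cardinal_Arithmetic.csum (cof r \<beta>) (cof r m))" for \<beta>
  proof -
    define N where "N = Field (cof r \<beta>) <+> Field (cof r m)"
    have ceq: "BNF_Cardinal_Arithmetic.csum (cof r \<beta>) (cof r m) = card_of N"
      unfolding N_def csum_def by (rule refl)
    have co: "Card_order (cof r \<beta>)" "Card_order (cof r m)" unfolding cof_minc by (rule card_of_Card_order)+
    have KN: "ordLeq2 (card_of ?K) (card_of N)"
      using ordIso_ordLeq_trans[OF kappa_cf ordLeq_csum2[OF co(2), of "cof r \<beta>"]] unfolding ceq .
    have natN: "ordLeq2 (card_of (UNIV :: nat set)) (card_of N)"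
      using ordLeq_transitive[OF ordLess_imp_ordLeq[OF kappa_unc] KN] .
    have inf: "\<not> finite N" using card_of_ordLeq_infinite[OF natN] by simp
    have mN: "ordLeq2 (card_of (minc r \<beta>)) (card_of N)"
      using ordLeq_csum1[OF co(1), of "cof r m"] unfolding ceq unfolding cof_minc .
    have un: "ordLeq2 (card_of (A \<union> B)) (card_of N)"
      if "ordLeq2 (card_of A) (card_of N)" "ordLeq2 (card_of B) (card_of N)" for A B :: "'a set"
      using card_of_Un_ordLeq_infinite_Field[of "card_of N" A B] inf that unfolding Field_card_of
      using card_of_card_order_on by blast
    have chN: "ordLeq2 (card_of (chain r ?K S C \<beta> n)) (card_of N)" for n
    proof (induction n)
      case 0
      have "ordLeq2 (card_of (if \<beta> \<in> S i then C i \<beta> else {})) (card_of N)" if "i \<in> ?K" for i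
      proof (cases "\<beta> \<in> S i")
        case True
        then show ?thesis using ordLeq_transitive[OF Csize[OF that True] KN] by simp
      next
        case False
        then show ?thesis using card_of_empty by simp
      qed
      then have "\<forall>i\<in>?K. ordLeq2 (card_of (if \<beta> \<in> S i then C i \<beta> else {})) (card_of N)" by blast
      from card_of_UNION_ordLeq_infinite[OF inf KN this]
      have "ordLeq2 (card_of (\<Union>i\<in>?K. if \<beta> \<in> S i then C i \<beta> else {})) (card_of N)" .
      then show ?case using un mN by simp
    next
      case (Suc n)
      have cl: "ordLeq2 (card_of (clo r \<beta> (chain r ?K S C \<beta> n))) (card_of N)"
        using clo_card[OF wo sub inf Suc] .
      have "ordLeq2 (card_of (\<Union>\<delta>\<in>clo r \<beta> (chain r ?K S C \<beta> n) \<inter> S i. C i \<delta>)) (card_of N)"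
        if "i \<in> ?K" for i
      proof -
        have "ordLeq2 (card_of (clo r \<beta> (chain r ?K S C \<beta> n) \<inter> S i)) (card_of N)"
          using ordLeq_transitive[OF card_of_mono1[OF Int_lower1] cl] .
        moreover have "\<forall>\<delta>\<in>clo r \<beta> (chain r ?K S C \<beta> n) \<inter> S i. ordLeq2 (card_of (C i \<delta>)) (card_of N)"
        proof
          fix \<delta> assume "\<delta> \<in> clo r \<beta> (chain r ?K S C \<beta> n) \<inter> S i"
          then have "\<delta> \<in> S i" by (rule IntD2)
          show "ordLeq2 (card_of (C i \<delta>)) (card_of N)"
            by (rule ordLeq_transitive[OF Csize[OF that \<open>\<delta> \<in> S i\<close>] KN])
        qed
        ultimately show ?thesis by (rule card_of_UNION_ordLeq_infinite[OF inf])
      qed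
      then have "\<forall>i\<in>?K. ordLeq2 (card_of (\<Union>\<delta>\<in>clo r \<beta> (chain r ?K S C \<beta> n) \<inter> S i. C i \<delta>)) (card_of N)" by blast
      from card_of_UNION_ordLeq_infinite[OF inf KN this]
      have "ordLeq2 (card_of (\<Union>i\<in>?K. \<Union>\<delta>\<in>clo r \<beta> (chain r ?K S C \<beta> n) \<inter> S i. C i \<delta>)) (card_of N)" .
      then show ?case using un Suc by simp
    qed
    have "ordLeq2 (card_of (U \<beta>)) (card_of N)"
      unfolding U_def by (rule card_of_UNION_ordLeq_infinite[OF inf natN]) (rule ballI, rule chN)
    then have "ordLeq2 (card_of (e \<beta>)) (card_of N)"
      unfolding e_def by (rule clo_card[OF wo Usub inf])
    then show ?thesis unfolding ceq .
  qed
  have club: "club_in r (underS r \<beta>) (e \<beta>)" for \<beta>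
    unfolding club_in_def
  proof (intro conjI ballI impI)
    show "e \<beta> \<subseteq> underS r \<beta>" unfolding e_def using clo_sub[OF Usub] .
  next
    fix \<alpha> assume "\<alpha> \<in> underS r \<beta>"
    then obtain x where "x \<in> minc r \<beta>" "(\<alpha>, x) \<in> r" using minc_spec[OF wo, of \<beta>] unfolding cofinal_def by blast
    moreover have "x \<in> e \<beta>" using \<open>x \<in> minc r \<beta>\<close> chU[of \<beta> 0] esub by auto
    ultimately show "\<exists>x\<in>e \<beta>. (\<alpha>, x) \<in> r" by blast
  next
    fix \<gamma> assume g: "\<gamma> \<in> underS r \<beta>" "isLimit r \<gamma> \<and> cofinal r (underS r \<gamma>) (e \<beta> \<inter> underS r \<gamma>)"
    have g2: "cofinal r (underS r \<gamma>) (clo r \<beta> (U \<beta>) \<inter> underS r \<gamma>)" using g(2) unfolding e_def by simp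
    have "cofinal r (underS r \<gamma>) (U \<beta> \<inter> underS r \<gamma>)"
      using clo_closed[OF wo Usub _ g2] g(2) by simp
    then have "\<gamma> \<in> {\<gamma> \<in> underS r \<beta>. isLimit r \<gamma> \<and> cofinal r (underS r \<gamma>) (U \<beta> \<inter> underS r \<gamma>)}"
      using g by simp
    then show "\<gamma> \<in> e \<beta>" unfolding e_def clo_def by (rule UnI2)
  qed
  have closure: "C i \<delta> \<subseteq> e \<beta>" if i: "i \<in> ?K" and d: "\<delta> \<in> S i \<inter> (e \<beta> \<union> {\<beta>})" for i \<beta> \<delta>
  proof (cases "\<delta> = \<beta>")
    case True
    then have "C i \<delta> \<subseteq> chain r ?K S C \<beta> 0" using i d by auto
    then show ?thesis using chU esub by blast
  next
    case False
    then have de: "\<delta> \<in> e \<beta>" "\<delta> \<in> S i" using d by auto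
    have "\<exists>n. \<delta> \<in> clo r \<beta> (chain r ?K S C \<beta> n)"
    proof (cases "\<delta> \<in> U \<beta>")
      case True
      then obtain n where "\<delta> \<in> chain r ?K S C \<beta> n" unfolding U_def by blast
      then have "\<delta> \<in> clo r \<beta> (chain r ?K S C \<beta> n)" unfolding clo_def by (rule UnI1)
      then show ?thesis by (rule exI)
    next
      case False
      then have dl: "\<delta> \<in> underS r \<beta>" "isLimit r \<delta>" "cofinal r (underS r \<delta>) (U \<beta> \<inter> underS r \<delta>)"
        using de(1) unfolding e_def clo_def by blast+
      have "ordIso2 (cof r \<delta>) (card_of ?K)" using S_cf i de(2) by blast
      then have "ordIso2 (card_of (minc r \<delta>)) (card_of ?K)" unfolding cof_minc .
      then have "ordLess2 (card_of (UNIV :: nat set)) (card_of (minc r \<delta>))"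
        by (rule ordLess_ordIso_trans[OF kappa_unc ordIso_symmetric])
      then have unc: "\<not> ordLeq2 (card_of (minc r \<delta>)) (card_of (UNIV :: nat set))"
        by (rule not_ordLess_ordLeq)
      have dl3: "cofinal r (underS r \<delta>) ((\<Union>n. chain r ?K S C \<beta> n) \<inter> underS r \<delta>)"
        using dl(3) unfolding U_def .
      obtain n where "cofinal r (underS r \<delta>) (chain r ?K S C \<beta> n \<inter> underS r \<delta>)"
        using cof_uncountable[OF wo dl3 unc] by (elim exE)
      then have "\<delta> \<in> clo r \<beta> (chain r ?K S C \<beta> n)" using dl(1,2) unfolding clo_def by (intro UnI2) simp
      then show ?thesis by (rule exI)
    qed
    then obtain n where "\<delta> \<in> clo r \<beta> (chain r ?K S C \<beta> n)" by blast
    then have "\<delta> \<in> clo r \<beta> (chain r ?K S C \<beta> n) \<inter> S i" using de(2) by (rule IntI)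
    then have "C i \<delta> \<subseteq> (\<Union>\<delta>\<in>clo r \<beta> (chain r ?K S C \<beta> n) \<inter> S i. C i \<delta>)" by blast
    also have "\<dots> \<subseteq> (\<Union>i\<in>?K. \<Union>\<delta>\<in>clo r \<beta> (chain r ?K S C \<beta> n) \<inter> S i. C i \<delta>)" using i by blast
    also have "\<dots> \<subseteq> chain r ?K S C \<beta> (Suc n)" by simp
    finally have "C i \<delta> \<subseteq> chain r ?K S C \<beta> (Suc n)" .
    then show ?thesis using chU esub by blast
  qed
  show ?thesis
    apply (rule exI[of _ e])
    using club cardp closure by blast
qed

end
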